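(* Let $R$ be a domain which is a D-K elementary divisor ring. Then $R$ is a ring of simple range 2.
   Context: All rings are associative with nonzero identity. For $x\in R$, $RxR$ denotes the two-sided ideal generated by $x$. A nonzero element $a\in R$ is invariant if $aR=Ra$. Two matrices $A,B$ over $R$ are equivalent if $B=PAQ$ for some invertible matrices $P,Q$ over $R$. $R$ is a D-K elementary divisor ring if every (rectangular) matrix $A$ over $R$ is equivalent to a matrix $\mathrm{diag}(\varepsilon_1,\dots,\varepsilon_r,0,\dots,0)$ such that $R\varepsilon_{i+1}R\subseteq \varepsilon_iR\cap R\varepsilon_i$ for all $i=1,\dots,r-1$ and $\varepsilon_1,\dots,\varepsilon_{r-1}$ are invariant elements. A ring $R$ is called a ring of simple range 2 if for all $a,b,c\in R$ with $c\neq 0$ and $RaR+RbR+RcR=R$ there exist $p,q\in R$ such that $R(pa+qb)R+RpcR=R$. *)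

theory Defs
  imports "Jordan_Normal_Form.Matrix"
begin

definition two_sided_ideal :: "'a::ring_1 \<Rightarrow> 'a set" where
  "two_sided_ideal x = {y. \<exists>(n::nat) r s. y = (\<Sum>i<n. r i * x * s i)}"

definition invariant_elem :: "'a::ring_1 \<Rightarrow> bool" where
  "invariant_elem a \<longleftrightarrow> a \<noteq> 0 \<and> {a * r | r. True} = {r * a | r. True}"

definition mat_equiv :: "'a::ring_1 mat \<Rightarrow> 'a mat \<Rightarrow> bool" where
  "mat_equiv A B \<longleftrightarrow> (\<exists>P Q. P \<in> carrier_mat (dim_row A) (dim_row A) \<and> invertible_mat P \<and>
      Q \<in> carrier_mat (dim_col A) (dim_col A) \<and> invertible_mat Q \<and> B = P * A * Q)"

definition diag_rect :: "nat \<Rightarrow> nat \<Rightarrow> nat \<Rightarrow> (nat \<Rightarrow> 'a::zero) \<Rightarrow> 'a mat" where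
  "diag_rect m n r e = mat m n (\<lambda>(i, j). if i = j \<and> i < r then e i else 0)"

definition DK_elementary_divisor_ring :: "'a::ring_1 itself \<Rightarrow> bool" where
  "DK_elementary_divisor_ring TYPE('a) \<longleftrightarrow>
    (\<forall>m n (A::'a mat). A \<in> carrier_mat m n \<longrightarrow>
      (\<exists>r e. r \<le> min m n \<and> mat_equiv A (diag_rect m n r e) \<and>
        (\<forall>i. Suc i < r \<longrightarrow>
           two_sided_ideal (e (Suc i)) \<subseteq> {e i * x | x. True} \<inter> {x * e i | x. True}) \<and>
        (\<forall>i. Suc i < r \<longrightarrow> invariant_elem (e i))))"

definition simple_range_2 :: "'a::ring_1 itself \<Rightarrow> bool" where
  "simple_range_2 TYPE('a) \<longleftrightarrow>
    (\<forall>a b c :: 'a. c \<noteq> 0 \<longrightarrow>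
       {u + v + w | u v w. u \<in> two_sided_ideal a \<and> v \<in> two_sided_ideal b \<and> w \<in> two_sided_ideal c} = UNIV \<longrightarrow>
       (\<exists>p q. {u + v | u v. u \<in> two_sided_ideal (p * a + q * b) \<and> v \<in> two_sided_ideal (p * c)} = UNIV))"

end

theory Submission
  imports Defs
begin

definition tsi :: "'a::ring_1 set \<Rightarrow> bool" where
  "tsi S \<longleftrightarrow> 0 \<in> S \<and> (\<forall>x\<in>S. \<forall>y\<in>S. x + y \<in> S) \<and> (\<forall>x\<in>S. \<forall>r s. r * x * s \<in> S)"

lemma tsi_sum: "finite F \<Longrightarrow> tsi S \<Longrightarrow> (\<forall>k\<in>F. f k \<in> S) \<Longrightarrow> sum f F \<in> S"
  by (induct F rule: finite_induct) (auto simp: tsi_def)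

lemma T_add1:
  assumes "y \<in> two_sided_ideal (x::'a::ring_1)" shows "y + a * x * b \<in> two_sided_ideal x"
proof -
  from assms obtain n r s where y: "y = (\<Sum>i<(n::nat). r i * x * s i)"
    unfolding two_sided_ideal_def by blast
  have "(\<Sum>i<n. r i * x * s i) = (\<Sum>i<n. (r(n:=a)) i * x * (s(n:=b)) i)"
    by (rule sum.cong) auto
  then have "y + a * x * b = (\<Sum>i<Suc n. (r(n:=a)) i * x * (s(n:=b)) i)"
    unfolding y by simp
  then show ?thesis unfolding two_sided_ideal_def by blast
qed

lemma T_addsum: "y \<in> two_sided_ideal (x::'a::ring_1) \<Longrightarrow> (\<Sum>i<(m::nat). r i * x * s i) + y \<in> two_sided_ideal x"
proof (induct m)
  case 0 then show ?case by simp
next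
  case (Suc m)
  have e: "(\<Sum>i<Suc m. r i * x * s i) + y = ((\<Sum>i<m. r i * x * s i) + y) + r m * x * s m"
    by (simp add: algebra_simps)
  show ?case unfolding e by (rule T_add1[OF Suc(1)[OF Suc(2)]])
qed

lemma tsi_T: "tsi (two_sided_ideal (x::'a::ring_1))"
  unfolding tsi_def
proof (intro conjI ballI allI)
  show "0 \<in> two_sided_ideal x" unfolding two_sided_ideal_def
    by (rule CollectI, rule exI[of _ 0]) simp
next
  fix y z assume "y \<in> two_sided_ideal x" "z \<in> two_sided_ideal x"
  then obtain m r s where z: "z = (\<Sum>i<(m::nat). r i * x * s i)"
    unfolding two_sided_ideal_def by blast
  show "y + z \<in> two_sided_ideal x" using T_addsum[OF \<open>y \<in> _\<close>, where m=m and r=r and s=s] z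
    by (simp add: add.commute)
next
  fix y a b assume "y \<in> two_sided_ideal x"
  then obtain n r s where y: "y = (\<Sum>i<(n::nat). r i * x * s i)"
    unfolding two_sided_ideal_def by blast
  have "a * y * b = (\<Sum>i<n. (a * r i) * x * (s i * b))"
    unfolding y by (simp add: sum_distrib_left sum_distrib_right mult.assoc)
  then show "a * y * b \<in> two_sided_ideal x" unfolding two_sided_ideal_def
    by (intro CollectI exI[of _ n] exI[of _ "\<lambda>i. a * r i"] exI[of _ "\<lambda>i. s i * b"]) simp
qed

lemma mem_T: "(x::'a::ring_1) \<in> two_sided_ideal x"
  unfolding two_sided_ideal_def
  by (rule CollectI, rule exI[of _ 1], rule exI[of _ "\<lambda>_. 1"], rule exI[of _ "\<lambda>_. 1"]) simp

lemma T_sub: "tsi S \<Longrightarrow> (x::'a::ring_1) \<in> S \<Longrightarrow> two_sided_ideal x \<subseteq> S"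
  unfolding two_sided_ideal_def
proof safe
  fix n r s assume "tsi S" "x \<in> S"
  then show "(\<Sum>i<(n::nat). r i * x * s i) \<in> S"
    by (intro tsi_sum) (auto simp: tsi_def)
qed

lemma tsi_plus: "tsi A \<Longrightarrow> tsi B \<Longrightarrow> tsi {u + v | u v. u \<in> A \<and> v \<in> B}"
  unfolding tsi_def
proof safe
  assume "0 \<in> A" "0 \<in> B" then show "\<exists>u v. 0 = u + v \<and> u \<in> A \<and> v \<in> B" by force
next
  fix u v u' v' assume "\<forall>x\<in>A. \<forall>y\<in>A. x + y \<in> A" "\<forall>x\<in>B. \<forall>y\<in>B. x + y \<in> B"
    "u \<in> A" "v \<in> B" "u' \<in> A" "v' \<in> B"
  then show "\<exists>ua va. u + v + (u' + v') = ua + va \<and> ua \<in> A \<and> va \<in> B"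
    by (intro exI[of _ "u+u'"] exI[of _ "v+v'"]) (simp add: algebra_simps)
next
  fix u v r s assume "\<forall>x\<in>A. \<forall>r s. r * x * s \<in> A" "\<forall>x\<in>B. \<forall>r s. r * x * s \<in> B" "u \<in> A" "v \<in> B"
  then show "\<exists>ua va. r * (u + v) * s = ua + va \<and> ua \<in> A \<and> va \<in> B"
    by (intro exI[of _ "r*u*s"] exI[of _ "r*v*s"]) (simp add: algebra_simps)
qed

lemma tsi_mul: "tsi S \<Longrightarrow> x \<in> S \<Longrightarrow> r * x \<in> S" "tsi S \<Longrightarrow> x \<in> S \<Longrightarrow> x * r \<in> S"
  unfolding tsi_def by (metis mult_1_right, metis mult_1_left)

lemma entries_mult: 
  assumes S: "tsi S" and D: "\<And>i j. i < dim_row D \<Longrightarrow> j < dim_col D \<Longrightarrow> D $$ (i,j) \<in> S"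
    and X: "dim_col X = dim_row D" and Y: "dim_row Y = dim_col D"
    and i: "i < dim_row X" and j: "j < dim_col Y"
  shows "(X * D * Y) $$ (i,j) \<in> S"
proof -
  have XD: "row X i \<bullet> col D l \<in> S" if l: "l < dim_col D" for l
  proof -
    show ?thesis unfolding scalar_prod_def
      using i l X by (intro tsi_sum[OF _ S]) (auto intro!: tsi_mul(1)[OF S] D)
  qed
  have "(X * D * Y) $$ (i,j) = row (X*D) i \<bullet> col Y j" using i j by simp
  also have "\<dots> \<in> S" unfolding scalar_prod_def
    using i j Y by (intro tsi_sum[OF _ S]) (auto intro!: tsi_mul(2)[OF S] XD)
  finally show ?thesis .
qed


lemma mem_T_mul: "x * y \<in> two_sided_ideal x" "y * x \<in> two_sided_ideal (x::'a::ring_1)"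
  using tsi_mul[OF tsi_T mem_T] by blast+

theorem theorem3p3:
  assumes "DK_elementary_divisor_ring TYPE('a::ring_1_no_zero_divisors)"
  shows "simple_range_2 TYPE('a)"
  unfolding simple_range_2_def
proof (intro allI impI)
  fix a b c :: 'a
  assume H: "{u + v + w | u v w. u \<in> two_sided_ideal a \<and> v \<in> two_sided_ideal b \<and> w \<in> two_sided_ideal c} = UNIV"
  define A :: "'a mat" where "A = mat 2 2 (\<lambda>(i,j). if i = 0 then (if j = 0 then a else c) else (if j = 0 then b else 0))"
  have Ac: "A \<in> carrier_mat 2 2" unfolding A_def by simp
  from assms[unfolded DK_elementary_divisor_ring_def, rule_format, OF Ac]
  obtain r e where r: "r \<le> 2" and eq: "mat_equiv A (diag_rect 2 2 r e)"
    and dv: "\<forall>i. Suc i < r \<longrightarrow> two_sided_ideal (e (Suc i)) \<subseteq> {e i * x | x. True} \<inter> {x * e i | x. True}"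
    by auto
  define D where "D = diag_rect 2 2 r e"
  from eq obtain P Q where P: "P \<in> carrier_mat 2 2" "invertible_mat P" and Q: "Q \<in> carrier_mat 2 2" "invertible_mat Q"
    and DPAQ: "D = P * A * Q"
    unfolding mat_equiv_def D_def using Ac by auto
  from P(2) obtain P' where P1: "P * P' = 1\<^sub>m 2" and P2: "P' * P = 1\<^sub>m (dim_row P')"
    unfolding invertible_mat_def inverts_mat_def using P(1) by auto
  from Q(2) obtain Q' where Q1: "Q * Q' = 1\<^sub>m 2" and Q2: "Q' * Q = 1\<^sub>m (dim_row Q')"
    unfolding invertible_mat_def inverts_mat_def using Q(1) by auto
  have dP': "dim_row P' = 2" "dim_col P' = 2"
    using arg_cong[OF P2, of dim_col] arg_cong[OF P1, of dim_col] P(1) by auto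
  have dQ': "dim_row Q' = 2" "dim_col Q' = 2"
    using arg_cong[OF Q2, of dim_col] arg_cong[OF Q1, of dim_col] Q(1) by auto
  have P'c: "P' \<in> carrier_mat 2 2" and Q'c: "Q' \<in> carrier_mat 2 2" using dP' dQ' by auto
  have "P' * D * Q' = P' * ((P * A) * Q) * Q'" unfolding DPAQ ..
  also have "\<dots> = (P' * P) * A * (Q * Q')"
    using P'c Q'c P(1) Q(1) Ac
    by (simp add: assoc_mult_mat[of _ 2 2 _ 2 _ 2])
  also have "\<dots> = A" using P2 Q1 dP' Ac by simp
  finally have AD: "A = P' * D * Q'" ..
  define d where "d = D $$ (0,0)"
  have d: "d = (if 0 < r then e 0 else 0)" unfolding d_def D_def diag_rect_def by simp
  have Dent: "D $$ (i,j) \<in> two_sided_ideal d" if "i < dim_row D" "j < dim_col D" for i j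
  proof -
    have ij: "i < 2" "j < 2" using that unfolding D_def diag_rect_def by auto
    have Dij: "D $$ (i,j) = (if i = j \<and> i < r then e i else 0)"
      using ij unfolding D_def diag_rect_def by simp
    show ?thesis
    proof (cases "i = j \<and> i < r")
      case False then have "D $$ (i,j) = 0" using Dij by (simp only: if_False)
      then show ?thesis using tsi_T[of d] unfolding tsi_def by simp
    next
      case True
      show ?thesis
      proof (cases "i = 0")
        case True then show ?thesis using Dij \<open>i = j \<and> i < r\<close> d mem_T by simp
      next
        case False
        then have i1: "i = 1" using ij by simp
        then have "Suc 0 < r" using True by simp
        then have "e 1 \<in> {e 0 * x | x. True}" using dv mem_T[of "e 1"] by auto
        then obtain x where "e 1 = e 0 * x" by auto
        then show ?thesis using Dij True i1 d \<open>Suc 0 < r\<close> mem_T_mul(1)[of "e 0" x] by simp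
      qed
    qed
  qed
  have dims: "dim_row D = 2" "dim_col D = 2" unfolding D_def diag_rect_def by auto
  have Aent: "A $$ (i,j) \<in> two_sided_ideal d" if "i < 2" "j < 2" for i j
    unfolding AD using that dims dP' dQ'
    by (intro entries_mult[OF tsi_T Dent]) auto
  have abc: "a \<in> two_sided_ideal d" "b \<in> two_sided_ideal d" "c \<in> two_sided_ideal d"
    using Aent[of 0 0] Aent[of 1 0] Aent[of 0 1] unfolding A_def by auto
  have "(1::'a) \<in> two_sided_ideal d"
  proof -
    have "(1::'a) \<in> UNIV" by simp
    then obtain u v w where "1 = u + v + w" "u \<in> two_sided_ideal a" "v \<in> two_sided_ideal b" "w \<in> two_sided_ideal c"
      unfolding H[symmetric] by blast
    moreover have "two_sided_ideal a \<subseteq> two_sided_ideal d" "two_sided_ideal b \<subseteq> two_sided_ideal d"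
      "two_sided_ideal c \<subseteq> two_sided_ideal d" using T_sub[OF tsi_T] abc by auto
    ultimately show ?thesis using tsi_T[of d] unfolding tsi_def by (metis subsetD)
  qed
  define p where "p = P $$ (0,0)"
  define q where "q = P $$ (0,1)"
  define S where "S = {u + v | u v. u \<in> two_sided_ideal (p * a + q * b) \<and> v \<in> two_sided_ideal (p * c)}"
  have tS: "tsi S" unfolding S_def by (intro tsi_plus tsi_T)
  have "d = (p * a + q * b) * Q $$ (0,0) + (p * c) * Q $$ (1,0)"
    unfolding d_def DPAQ p_def q_def A_def using P(1) Q(1)
    by (simp add: scalar_prod_def numeral_2_eq_2 lessThan_Suc atLeast0LessThan algebra_simps)
  then have "d \<in> S" unfolding S_def using mem_T_mul(1) by blast
  then have "1 \<in> S" using T_sub[OF tS] \<open>1 \<in> two_sided_ideal d\<close> by auto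
  then have "S = UNIV" using tS unfolding tsi_def by (metis UNIV_eq_I mult_1_left mult_1_right)
  then show "\<exists>p q. {u + v | u v. u \<in> two_sided_ideal (p * a + q * b) \<and> v \<in> two_sided_ideal (p * c)} = UNIV"
    unfolding S_def by blast
qed

end
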